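(* For every $n\ge1$ and every Boolean function $f:\{0,1\}^n\to\{0,1\}$, $bs(f)\le 2\,s(f)^4$.
   Context: For $x\in\{0,1\}^n$ and $S\subseteq[n]=\{1,\dots,n\}$, $x^{(S)}$ denotes the string differing from $x$ exactly in the coordinates of $S$. The sensitivity $s(f,x)$ is the number of $i\in[n]$ with $f(x)\neq f(x^{(\{i\})})$, and $s(f)=\max_x s(f,x)$. The block sensitivity $bs(f)$ is the maximum $t$ such that there exist an input $x\in\{0,1\}^n$ and pairwise disjoint nonempty sets $B_1,\dots,B_t\subseteq[n]$ with $f(x)\ne f(x^{(B_j)})$ for all $j$. *)

theory Defs
  imports Main
begin

text \<open>An input x in {0,1}^n is encoded as the set of coordinates i in [n] with x_i = 1,
  i.e. a subset of {1..n}. A Boolean function on {0,1}^n is f :: nat set => bool,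
  only ever evaluated on subsets of {1..n}.\<close>

definition cube :: "nat \<Rightarrow> nat set set" where
  "cube n = Pow {1..n}"

definition flip :: "nat set \<Rightarrow> nat set \<Rightarrow> nat set" where
  "flip x S = (x - S) \<union> (S - x)"

definition sens_at :: "nat \<Rightarrow> (nat set \<Rightarrow> bool) \<Rightarrow> nat set \<Rightarrow> nat" where
  "sens_at n f x = card {i \<in> {1..n}. f x \<noteq> f (flip x {i})}"

definition sensitivity :: "nat \<Rightarrow> (nat set \<Rightarrow> bool) \<Rightarrow> nat" where
  "sensitivity n f = Max ((\<lambda>x. sens_at n f x) ` cube n)"

definition block_sensitivity :: "nat \<Rightarrow> (nat set \<Rightarrow> bool) \<Rightarrow> nat" where
  "block_sensitivity n f = Max {t. \<exists>x \<in> cube n. \<exists>B :: nat \<Rightarrow> nat set.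
      (\<forall>j<t. B j \<noteq> {} \<and> B j \<subseteq> {1..n} \<and> f x \<noteq> f (flip x (B j))) \<and>
      (\<forall>j<t. \<forall>k<t. j \<noteq> k \<longrightarrow> B j \<inter> B k = {})}"

end

theory Submission
  imports Defs Complex_Main
begin

definition DD :: "nat set \<Rightarrow> (nat \<Rightarrow> real) \<Rightarrow> real" where
  "DD K p = (\<Sum>z\<in>K. p z / (\<Prod>w\<in>K-{z}. (real z - real w)))"

lemma DD_lin: "DD K (\<lambda>z. a * p z + b * q z) = a * DD K p + b * DD K q"
  unfolding DD_def by (simp add: sum.distrib sum_distrib_left add_divide_distrib mult.assoc)

lemma DD_shift:
  assumes "finite K" "a \<notin> K"
  shows "DD (insert a K) (\<lambda>z. (real z - real a) * p z) = DD K p"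
proof -
  have "DD (insert a K) (\<lambda>z. (real z - real a) * p z)
     = (\<Sum>z\<in>K. (real z - real a) * p z / (\<Prod>w\<in>insert a K-{z}. (real z - real w)))"
    unfolding DD_def using assms by (simp add: sum.insert)
  also have "\<dots> = (\<Sum>z\<in>K. p z / (\<Prod>w\<in>K-{z}. (real z - real w)))"
  proof (rule sum.cong[OF refl])
    fix z assume z: "z \<in> K"
    then have za: "z \<noteq> a" using assms by auto
    have "insert a K - {z} = insert a (K - {z})" using za by auto
    then have "(\<Prod>w\<in>insert a K-{z}. (real z - real w)) = (real z - real a) * (\<Prod>w\<in>K-{z}. (real z - real w))"
      using assms by simp
    then show "(real z - real a) * p z / (\<Prod>w\<in>insert a K-{z}. (real z - real w)) = p z / (\<Prod>w\<in>K-{z}. (real z - real w))"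
      using za by simp
  qed
  finally show ?thesis unfolding DD_def .
qed

lemma DD_const0: "finite K \<Longrightarrow> card K \<ge> 2 \<Longrightarrow> DD K (\<lambda>z. 1) = 0"
proof (induction "card K" arbitrary: K rule: less_induct)
  case less
  from less.prems obtain a where a: "a \<in> K"
    by (metis card.empty empty_iff not_numeral_le_zero subsetI subset_antisym)
  have "card (K - {a}) \<ge> 1" using less.prems a by simp
  then obtain b where b: "b \<in> K - {a}"
    by (metis One_nat_def card.empty empty_iff not_one_le_zero subsetI subset_antisym)
  have ab: "a \<noteq> b" using b by auto
  have e: "(\<lambda>z::nat. 1::real) = (\<lambda>z. (1/(real a - real b)) * ((real z - real b) * 1) + (-1/(real a - real b)) * ((real z - real a) * 1))"
  proof
    fix z :: nat
    have nz: "real a - real b \<noteq> 0" using ab by simp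
    show "(1::real) = (1/(real a - real b)) * ((real z - real b) * 1) + (-1/(real a - real b)) * ((real z - real a) * 1)"
      using nz by (simp add: divide_simps)
  qed
  have Ka: "K = insert a (K - {a})" using a by auto
  have Kb: "K = insert b (K - {b})" using b by auto
  have d1: "DD K (\<lambda>z. (real z - real b) * 1) = DD (K - {b}) (\<lambda>z. 1)"
    using DD_shift[of "K - {b}" b "\<lambda>z. 1"] Kb less.prems by simp
  have d2: "DD K (\<lambda>z. (real z - real a) * 1) = DD (K - {a}) (\<lambda>z. 1)"
    using DD_shift[of "K - {a}" a "\<lambda>z. 1"] Ka less.prems by simp
  have L: "DD K (\<lambda>z. 1) = (1/(real a - real b)) * DD K (\<lambda>z. (real z - real b) * 1) + (-1/(real a - real b)) * DD K (\<lambda>z. (real z - real a) * 1)"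
    by (subst e) (rule DD_lin)
  show ?case
  proof (cases "card K = 2")
    case True
    then have "K - {b} = {a}" "K - {a} = {b}" using a b ab less.prems
      by (auto simp: card_2_iff)
    then have "DD (K - {b}) (\<lambda>z. 1) = 1" "DD (K - {a}) (\<lambda>z. 1) = 1" by (simp_all add: DD_def)
    then show ?thesis using L d1 d2 by (simp add: divide_simps)
  next
    case False
    then have "DD (K - {b}) (\<lambda>z. 1) = 0" "DD (K - {a}) (\<lambda>z. 1) = 0"
      using less a b by (auto intro!: less.hyps simp: card_Diff_singleton)
    then show ?thesis using L d1 d2 by simp
  qed
qed

definition PP :: "nat \<Rightarrow> (nat \<Rightarrow> real) \<Rightarrow> bool" where
  "PP m p \<longleftrightarrow> (\<forall>K. finite K \<longrightarrow> card K \<ge> m + 2 \<longrightarrow> DD K p = 0)"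

lemma PP_const: "PP m (\<lambda>z. c)"
  unfolding PP_def
proof (intro allI impI)
  fix K :: "nat set" assume "finite K" "card K \<ge> m + 2"
  then have "DD K (\<lambda>z. 1) = 0" by (intro DD_const0) auto
  then show "DD K (\<lambda>z. c) = 0" using DD_lin[of K c "\<lambda>z. 1" 0 "\<lambda>z. 1"] by simp
qed

lemma PP_mono: "PP m p \<Longrightarrow> m \<le> m' \<Longrightarrow> PP m' p"
  unfolding PP_def by auto

lemma PP_lin: "PP m p \<Longrightarrow> PP m q \<Longrightarrow> PP m (\<lambda>z. a * p z + b * q z)"
  unfolding PP_def by (simp add: DD_lin)

lemma PP_sum: "finite A \<Longrightarrow> (\<And>r. r \<in> A \<Longrightarrow> PP m (p r)) \<Longrightarrow> PP m (\<lambda>z. \<Sum>r\<in>A. p r z)"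
proof (induction A rule: finite_induct)
  case empty then show ?case using PP_const[of m 0] by simp
next
  case (insert x F)
  then show ?case using PP_lin[of m "p x" "\<lambda>z. \<Sum>r\<in>F. p r z" 1 1] by simp
qed

lemma PP_scale: "PP m p \<Longrightarrow> PP m (\<lambda>z. a * p z)"
  using PP_lin[of m p p a 0] by simp

lemma PP_step:
  assumes "PP m p"
  shows "PP (Suc m) (\<lambda>z. (real z - c) * p z)"
  unfolding PP_def
proof (intro allI impI)
  fix K :: "nat set" assume K: "finite K" "card K \<ge> Suc m + 2"
  then obtain a where a: "a \<in> K"
    by (metis card.empty empty_iff not_numeral_le_zero le_zero_eq add_is_0 subsetI subset_antisym zero_neq_numeral)
  have Ka: "K = insert a (K - {a})" using a by auto
  have "DD K (\<lambda>z. (real z - real a) * p z) = DD (K - {a}) p"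
    using DD_shift[of "K - {a}" a p] Ka K by simp
  also have "\<dots> = 0" using assms K a unfolding PP_def by (auto simp: card_Diff_singleton)
  finally have d1: "DD K (\<lambda>z. (real z - real a) * p z) = 0" .
  have d2: "DD K p = 0" using assms K unfolding PP_def by auto
  have e: "(\<lambda>z. (real z - c) * p z) = (\<lambda>z. 1 * ((real z - real a) * p z) + (real a - c) * p z)"
    by (auto simp: field_simps)
  show "DD K (\<lambda>z. (real z - c) * p z) = 0"
    unfolding e DD_lin using d1 d2 by simp
qed

lemma PP_prod: "PP v (\<lambda>k. \<Prod>i<v. (real k - real i))"
proof (induction v)
  case 0 then show ?case using PP_const[of 0 1] by simp
next
  case (Suc v)
  show ?case using PP_step[OF Suc, of "real v"] by (simp add: mult.commute)
qed

lemma PP_binom: "PP v (\<lambda>k. real (k choose v))"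
proof -
  have e: "(\<lambda>k. real (k choose v)) = (\<lambda>k. (1 / fact v) * (\<Prod>i<v. (real k - real i)))"
    by (auto simp: binomial_gbinomial gbinomial_prod_rev field_simps atLeast0LessThan)
  show ?thesis unfolding e by (intro PP_scale PP_prod)
qed

lemma prodA:
  assumes "j \<le> d"
  shows "(\<Prod>i\<in>{..d}-{j}. (real j - real i)) = (-1)^(d-j) * fact j * fact (d-j)"
  using assms
proof (induction d rule: nat_induct_at_least)
  case base
  have "{..j}-{j} = {0..<j}" by auto
  then have "(\<Prod>i\<in>{..j}-{j}. (real j - real i)) = (\<Prod>i\<in>{0..<j}. real (j - i))"
    by (intro prod.cong) (auto simp: of_nat_diff)
  also have "\<dots> = fact j" by (simp add: fact_prod_rev)
  finally show ?case by simp
next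
  case (Suc n)
  have e: "{..Suc n}-{j} = insert (Suc n) ({..n}-{j})" using Suc by auto
  have s: "Suc n - j = Suc (n - j)" using Suc by simp
  have "(\<Prod>i\<in>{..Suc n}-{j}. (real j - real i)) = (real j - real (Suc n)) * (\<Prod>i\<in>{..n}-{j}. (real j - real i))"
    unfolding e by simp
  also have "\<dots> = (- real (Suc (n - j))) * ((-1)^(n-j) * fact j * fact (n-j))"
    using Suc by (simp add: of_nat_diff)
  also have "\<dots> = (-1)^(Suc n - j) * fact j * fact (Suc n - j)"
    unfolding s by (simp add: algebra_simps)
  finally show ?case .
qed

lemma prodB0:
  assumes "1 \<le> j"
  shows "(\<Prod>i\<le>d. (real j + real i)) * fact (j-1) = fact (j+d)"
proof (induction d)
  case 0
  have "fact j = real j * fact (j - 1)" using assms by (simp add: fact_num_eq_if)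
  then show ?case by simp
next
  case (Suc d)
  have "(\<Prod>i\<le>Suc d. (real j + real i)) * fact (j-1) = (real j + real (Suc d)) * ((\<Prod>i\<le>d. (real j + real i)) * fact (j-1))"
    by (simp add: atMost_Suc)
  also have "\<dots> = fact (j + Suc d)" using Suc by (simp add: algebra_simps)
  finally show ?case .
qed

lemma prodB:
  assumes "1 \<le> j" "j \<le> d"
  shows "2 * fact j * (\<Prod>i\<in>{..d}-{j}. (real j + real i)) = fact (d+j)"
proof -
  have "(\<Prod>i\<le>d. (real j + real i)) = (real j + real j) * (\<Prod>i\<in>{..d}-{j}. (real j + real i))"
    using assms by (subst prod.remove[of _ j]) auto
  then have "(real j + real j) * (\<Prod>i\<in>{..d}-{j}. (real j + real i)) * fact (j-1) = fact (j+d)"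
    using prodB0[OF assms(1), of d] by simp
  moreover have "fact j = real j * fact (j - 1)" using assms by (simp add: fact_num_eq_if)
  ultimately show ?thesis by (simp add: algebra_simps)
qed

lemma prodE:
  assumes "1 \<le> j" "j \<le> d"
  shows "(\<Prod>i\<in>{..d}-{j}. (real j - real i) * (real j + real i)) = (-1)^(d-j) * fact (d-j) * fact (d+j) / 2"
proof -
  have "(\<Prod>i\<in>{..d}-{j}. (real j - real i) * (real j + real i))
     = (\<Prod>i\<in>{..d}-{j}. (real j - real i)) * (\<Prod>i\<in>{..d}-{j}. (real j + real i))"
    by (rule prod.distrib)
  moreover have "fact j > (0::real)" by simp
  ultimately show ?thesis using prodA[OF assms(2)] prodB[OF assms]
    by (simp add: field_simps)
qed

lemma prodE0:
  "(\<Prod>i\<in>{..d}-{0}. (real 0 - real i) * (real 0 + real i)) = (-1)^d * fact d * fact d"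
proof -
  have "(\<Prod>i\<in>{..d}-{0}. (real 0 - real i) * (real 0 + real i))
     = (\<Prod>i\<in>{..d}-{0}. (real 0 - real i)) * (\<Prod>i\<in>{..d}-{0}. (real i))"
    by (subst prod.distrib[symmetric]) (rule prod.cong; simp)
  moreover have "(\<Prod>i\<in>{..d}-{0}. (real i)) = fact d"
  proof -
    have "{..d}-{0} = {1..d}" by auto
    then show ?thesis by (simp add: fact_prod)
  qed
  ultimately show ?thesis using prodA[of 0 d] by simp
qed

lemma fact_sq_le:
  assumes "j \<le> d"
  shows "fact d * fact d \<le> fact (d-j) * (fact (d+j) :: nat)"
  using assms
proof (induction j)
  case 0 then show ?case by simp
next
  case (Suc j)
  have s: "d - j = Suc (d - Suc j)" using Suc by simp
  have "fact (d-j) * fact (d+j) = (d - j) * (fact (d - Suc j) * fact (d+j))"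
    unfolding s by (simp add: algebra_simps)
  also have "\<dots> \<le> (d + Suc j) * (fact (d - Suc j) * fact (d+j))"
    by (intro mult_right_mono) auto
  also have "\<dots> = fact (d - Suc j) * fact (d + Suc j)" by (simp add: algebra_simps)
  finally show ?case using Suc by simp
qed

lemma odd_sum_bound:
  assumes "1 \<le> d"
  shows "(\<Sum>j\<in>{1..d}. if odd j then 2/(1+2*real j^2) else 0) \<le> 11/12 - 1/(4*real((d+1) div 2))"
  using assms
proof (induction d rule: nat_induct_at_least)
  case base then show ?case by simp
next
  case (Suc n)
  have e: "{1..Suc n} = insert (Suc n) {1..n}" by auto
  show ?case
  proof (cases "odd (Suc n)")
    case False
    then have "(Suc n + 1) div 2 = (n+1) div 2" by presburger
    then show ?thesis using Suc False unfolding e by simp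
  next
    case True
    then obtain M where M: "n = 2*M" by (metis even_Suc evenE)
    have M1: "1 \<le> M" using M Suc by simp
    have d1: "(n+1) div 2 = M" "(Suc n + 1) div 2 = M + 1" using M by presburger+
    have key: "2/(1+2*real (Suc n)^2) \<le> 1/(4*real M) - 1/(4*real (M+1))"
    proof -
      have "2/(1+2*real (Suc n)^2) = 2/(8*real M^2 + 8*real M + 3)"
        using M by (simp add: power2_eq_square algebra_simps)
      also have "\<dots> \<le> 2/(8*real M^2 + 8*real M)"
      proof (rule divide_left_mono)
        have "0 < 8*real M" using M1 by simp
        then have "0 < 8*real M^2 + 8*real M" by (simp add: add_nonneg_pos)
        then show "0 < (8*real M^2 + 8*real M + 3) * (8*real M^2 + 8*real M)"
          by (intro mult_pos_pos) auto
      qed auto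
      also have "\<dots> = 2/(2*(4*real M*(real M+1)))"
        by (simp add: power2_eq_square algebra_simps)
      also have "\<dots> = 1/(4*real M*(real M+1))"
        by (simp only: divide_divide_eq_left[symmetric])
      also have "\<dots> = 1/(4*real M) - 1/(4*real (M+1))"
        using M1 by (simp add: field_simps)
      finally show ?thesis .
    qed
    show ?thesis using Suc.IH True key unfolding e d1 by simp
  qed
qed

lemma odd_sum_lt1:
  "(\<Sum>j\<in>{1..d}. if odd j then 2/(1+2*real j^2) else 0) < 1"
proof (cases "d = 0")
  case True then show ?thesis by simp
next
  case False
  then have "(d+1) div 2 \<ge> 1" by presburger
  then have "1/(4*real((d+1) div 2)) > 0" by simp
  then show ?thesis using odd_sum_bound[of d] False by linarith
qed

lemma aux_term:
  fixes s u c X Y F q :: real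
  assumes "s * s = 1" "X \<noteq> 0" "Y \<noteq> 0" "c \<noteq> 0"
  shows "q / (Y * c * (s * X / 2)) * (c * (s * u) * F) = u * q * (2 * F / (Y * X))"
proof -
  have "s \<noteq> 0" using assms(1) by auto
  have "q / (Y * c * (s * X / 2)) * (c * (s * u) * F) = (s * s) * (u * q * (2 * F / (Y * X)))"
    using assms `s \<noteq> 0` by (simp add: field_simps)
  then show ?thesis using assms(1) by simp
qed

lemma discrete_markov:
  assumes PPd: "PP d p" and p0: "p 0 = 0" and p1: "p 1 = 1"
    and bnd: "\<And>k. k \<le> t \<Longrightarrow> 0 \<le> p k \<and> p k \<le> 1"
  shows "t \<le> 2*d^2"
proof (rule ccontr)
  assume "\<not> t \<le> 2*d^2"
  then have tb: "2*d^2 + 1 \<le> t" by simp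
  define y :: "nat \<Rightarrow> nat" where "y j = 1 + 2*j^2" for j
  have ymono: "strict_mono y" unfolding y_def by (intro strict_monoI) (simp add: power_strict_mono)
  then have yinj: "inj_on y A" for A using strict_mono_imp_inj_on by blast
  have y0: "0 \<notin> y ` A" for A unfolding y_def by auto
  have yt: "y j \<le> t" if "j \<le> d" for j
  proof -
    have "j^2 \<le> d^2" using that by (simp add: power_mono)
    then show ?thesis using tb unfolding y_def by linarith
  qed
  define K where "K = insert 0 (y ` {..d})"
  have fK: "finite K" unfolding K_def by simp
  have cK: "card K = d + 2" unfolding K_def using y0 yinj by (simp add: card_image)
  have DD0: "DD K p = 0" using PPd fK cK unfolding PP_def by simp
  define E where "E j = (\<Prod>i\<in>{..d}-{j}. (real j - real i) * (real j + real i))" for j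
  have om: "(\<Prod>w\<in>K-{y j}. (real (y j) - real w)) = real (y j) * 2^d * E j" if j: "j \<le> d" for j
  proof -
    have "K - {y j} = insert 0 (y ` ({..d}-{j}))"
      unfolding K_def using yinj[of "{..d}"] j y0 by (auto simp: inj_on_eq_iff)
    then have "(\<Prod>w\<in>K-{y j}. (real (y j) - real w)) = real (y j) * (\<Prod>w\<in>y ` ({..d}-{j}). (real (y j) - real w))"
      using y0 by simp
    also have "(\<Prod>w\<in>y ` ({..d}-{j}). (real (y j) - real w)) = (\<Prod>i\<in>{..d}-{j}. (real (y j) - real (y i)))"
      by (rule prod.reindex[OF yinj, unfolded comp_def])
    also have "\<dots> = (\<Prod>i\<in>{..d}-{j}. 2 * ((real j - real i) * (real j + real i)))"
      by (intro prod.cong) (auto simp: y_def power2_eq_square algebra_simps)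
    also have "\<dots> = 2^d * E j"
      unfolding E_def using j by (simp add: prod.distrib)
    finally show ?thesis by simp
  qed
  have "DD K p = (\<Sum>z\<in>y ` {..d}. p z / (\<Prod>w\<in>K-{z}. (real z - real w)))"
    unfolding DD_def using p0 y0 by (simp add: K_def)
  also have "\<dots> = (\<Sum>j\<le>d. p (y j) / (\<Prod>w\<in>K-{y j}. (real (y j) - real w)))"
    by (rule sum.reindex[OF yinj, unfolded comp_def])
  also have "\<dots> = (\<Sum>j\<le>d. p (y j) / (real (y j) * 2^d * E j))"
    by (intro sum.cong) (auto simp: om)
  finally have S0: "(\<Sum>j\<le>d. p (y j) / (real (y j) * 2^d * E j)) = 0" using DD0 by simp
  define F :: real where "F = fact d * fact d"
  have Fpos: "F > 0" unfolding F_def by simp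
  define r where "r j = 2 * F / (real (y j) * fact (d-j) * fact (d+j))" for j
  have E0: "E 0 = (-1)^d * F" unfolding E_def F_def using prodE0[of d] by simp
  have Ej: "E j = (-1)^(d-j) * fact (d-j) * fact (d+j) / 2" if "1 \<le> j" "j \<le> d" for j
    unfolding E_def using prodE[OF that] by simp
  have term_j: "p (y j) / (real (y j) * 2^d * E j) * (2^d * (-1)^d * F) = (-1)^j * p (y j) * r j"
    if "1 \<le> j" "j \<le> d" for j
  proof -
    define s :: real where "s = (-1)^(d-j)"
    define X :: real where "X = fact (d-j) * fact (d+j)"
    have ss: "s*s = 1" unfolding s_def by (simp flip: power_add)
    have Eq: "E j = s * X / 2" unfolding s_def X_def using Ej[OF that] by (simp add: mult.assoc)
    have dq: "(-1::real)^d = s * (-1)^j" unfolding s_def using that by (simp flip: power_add)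
    have X0: "X \<noteq> 0" unfolding X_def by simp
    have "y j \<noteq> 0" unfolding y_def by simp
    then have Y0: "real (y j) \<noteq> 0" by simp
    have rj: "r j = 2*F/(real (y j) * X)" unfolding r_def X_def by (simp add: mult.assoc)
    show ?thesis unfolding Eq dq rj by (rule aux_term[OF ss X0 Y0]) simp
  qed
  have term_0: "p (y 0) / (real (y 0) * 2^d * E 0) * (2^d * (-1)^d * F) = 1"
    using Fpos p1 unfolding E0 by (simp add: y_def field_simps)
  have "0 = (\<Sum>j\<le>d. p (y j) / (real (y j) * 2^d * E j)) * (2^d * (-1)^d * F)"
    using S0 by simp
  also have "\<dots> = (\<Sum>j\<le>d. p (y j) / (real (y j) * 2^d * E j) * (2^d * (-1)^d * F))"
    by (simp add: sum_distrib_right)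
  also have "{..d} = insert 0 {1..d}" by auto
  also have "(\<Sum>j\<in>insert 0 {1..d}. p (y j) / (real (y j) * 2^d * E j) * (2^d * (-1)^d * F))
      = p (y 0) / (real (y 0) * 2^d * E 0) * (2^d * (-1)^d * F) + (\<Sum>j\<in>{1..d}. p (y j) / (real (y j) * 2^d * E j) * (2^d * (-1)^d * F))"
    by (rule sum.insert) auto
  also have "\<dots> = 1 + (\<Sum>j\<in>{1..d}. (-1)^j * p (y j) * r j)"
    unfolding term_0
  proof (intro arg_cong2[where f="(+)"] refl sum.cong)
    fix j assume "j \<in> {1..d}"
    then have "1 \<le> j" "j \<le> d" by auto
    then show "p (y j) / (real (y j) * 2^d * E j) * (2^d * (-1)^d * F) = (-1)^j * p (y j) * r j"
      by (rule term_j)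
  qed
  finally have S1: "1 + (\<Sum>j\<in>{1..d}. (-1)^j * p (y j) * r j) = 0" by simp
  have lb: "(-1)^j * p (y j) * r j \<ge> - (if odd j then 2/(1+2*real j^2) else 0)"
    if "j \<in> {1..d}" for j
  proof -
    have pj: "0 \<le> p (y j)" "p (y j) \<le> 1" using bnd[OF yt] that by auto
    have fl: "fact d * fact d \<le> (fact (d-j) * fact (d+j) :: real)"
    proof -
      have "real (fact d * fact d) \<le> real (fact (d-j) * fact (d+j))"
        using fact_sq_le[of j d] that by (intro of_nat_mono) auto
      then show ?thesis by (simp only: of_nat_mult of_nat_fact)
    qed
    have ypos: "real (y j) > 0" unfolding y_def by (simp add: add_pos_nonneg del: of_nat_add)
    have rpos: "0 \<le> r j" unfolding r_def using Fpos ypos by simp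
    have "r j \<le> 2 / real (y j)"
    proof -
      have e: "r j = (2 / real (y j)) * (F / (fact (d-j) * fact (d+j)))"
        unfolding r_def by (simp add: field_simps)
      have h: "F / (fact (d-j) * fact (d+j)) \<le> 1"
        using fl unfolding F_def by (simp add: divide_le_eq_1)
      show ?thesis unfolding e using ypos h by (intro mult_left_le) auto
    qed
    then have ry: "r j \<le> 2/(1+2*real j^2)" unfolding y_def by simp
    show ?thesis
    proof (cases "odd j")
      case True
      then have "(-1)^j * p (y j) * r j = - (p (y j) * r j)" by simp
      moreover have "p (y j) * r j \<le> r j" using pj rpos by (simp add: mult_left_le_one_le)
      ultimately show ?thesis using True ry by simp
    next
      case False
      then show ?thesis using pj rpos by simp
    qed
  qed
  have "(\<Sum>j\<in>{1..d}. (-1)^j * p (y j) * r j) \<ge> (\<Sum>j\<in>{1..d}. - (if odd j then 2/(1+2*real j^2) else 0))"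
    by (intro sum_mono lb)
  then have "(\<Sum>j\<in>{1..d}. if odd j then 2/(1+2*real j^2) else 0) \<ge> 1"
    using S1 by (simp add: sum_negf)
  then show False using odd_sum_lt1[of d] by simp
qed

lemma nontriv_sol:
  fixes a :: "'b \<Rightarrow> 'a \<Rightarrow> real"
  assumes "finite J" "finite I" "card J < card I"
  shows "\<exists>y. (\<exists>i\<in>I. y i \<noteq> 0) \<and> (\<forall>j\<in>J. (\<Sum>i\<in>I. a j i * y i) = 0)"
  using assms
proof (induction J arbitrary: I a rule: finite_induct)
  case empty
  then obtain i0 where "i0 \<in> I" by (metis card.empty card_gt_0_iff equals0I)
  then show ?case by (intro exI[of _ "\<lambda>i. if i = i0 then 1 else 0"]) auto
next
  case (insert j0 J')
  show ?case
  proof (cases "\<forall>i\<in>I. a j0 i = 0")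
    case True
    have "card J' < card I" using insert by simp
    then obtain y where y: "\<exists>i\<in>I. y i \<noteq> 0" "\<forall>j\<in>J'. (\<Sum>i\<in>I. a j i * y i) = 0"
      using insert.IH[OF insert.prems(1)] by blast
    then show ?thesis using True by (intro exI[of _ y]) auto
  next
    case False
    then obtain i0 where i0: "i0 \<in> I" "a j0 i0 \<noteq> 0" by blast
    define I' where "I' = I - {i0}"
    define a' where "a' j i = a j i - a j i0 * a j0 i / a j0 i0" for j i
    have fI': "finite I'" using insert.prems unfolding I'_def by simp
    have "card I' = card I - 1" unfolding I'_def using i0 insert.prems by simp
    then have "card J' < card I'" using insert by simp
    then obtain y' where y': "\<exists>i\<in>I'. y' i \<noteq> 0" "\<forall>j\<in>J'. (\<Sum>i\<in>I'. a' j i * y' i) = 0"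
      using insert.IH[OF fI'] by blast
    define y where "y i = (if i = i0 then - (\<Sum>k\<in>I'. a j0 k * y' k) / a j0 i0 else y' i)" for i
    have split: "(\<Sum>i\<in>I. a j i * y i) = a j i0 * y i0 + (\<Sum>i\<in>I'. a j i * y' i)" for j
    proof -
      have "(\<Sum>i\<in>I. a j i * y i) = a j i0 * y i0 + (\<Sum>i\<in>I'. a j i * y i)"
        unfolding I'_def using i0 insert.prems by (simp add: sum.remove)
      moreover have "(\<Sum>i\<in>I'. a j i * y i) = (\<Sum>i\<in>I'. a j i * y' i)"
        unfolding I'_def y_def by (intro sum.cong) auto
      ultimately show ?thesis by simp
    qed
    have e0: "(\<Sum>i\<in>I. a j0 i * y i) = 0"
      unfolding split using i0 by (simp add: y_def)
    have e1: "(\<Sum>i\<in>I. a j i * y i) = 0" if "j \<in> J'" for j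
    proof -
      have "(\<Sum>i\<in>I. a j i * y i) = (\<Sum>i\<in>I'. a j i * y' i) - a j i0 * (\<Sum>k\<in>I'. a j0 k * y' k) / a j0 i0"
        unfolding split by (simp add: y_def)
      also have "\<dots> = (\<Sum>i\<in>I'. a j i * y' i) - (a j i0 / a j0 i0) * (\<Sum>k\<in>I'. a j0 k * y' k)"
        by simp
      also have "\<dots> = (\<Sum>i\<in>I'. a j i * y' i - (a j i0 / a j0 i0) * (a j0 i * y' i))"
        by (simp add: sum_subtractf sum_distrib_left)
      also have "\<dots> = (\<Sum>i\<in>I'. a' j i * y' i)"
        unfolding a'_def by (intro sum.cong refl) (simp add: left_diff_distrib)
      also have "\<dots> = 0" using y' that by simp
      finally show ?thesis .
    qed
    have nz: "\<exists>i\<in>I. y i \<noteq> 0"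
    proof -
      obtain i where "i \<in> I'" "y' i \<noteq> 0" using y' by blast
      then show ?thesis unfolding I'_def y_def by (intro bexI[of _ i]) auto
    qed
    show ?thesis using e0 e1 nz by (intro exI[of _ y]) auto
  qed
qed

definition tog :: "nat set \<Rightarrow> nat \<Rightarrow> nat set" where
  "tog S i = (if i \<in> S then S - {i} else insert i S)"

definition sg :: "nat set \<Rightarrow> nat \<Rightarrow> real" where
  "sg S i = (-1) ^ card {k\<in>S. k < i}"

definition Aop :: "nat set \<Rightarrow> (nat set \<Rightarrow> real) \<Rightarrow> nat set \<Rightarrow> real" where
  "Aop C v S = (\<Sum>i\<in>C. sg S i * v (tog S i))"

lemma tog_tog: "tog (tog S i) i = S"
  unfolding tog_def by auto

lemma tog_comm: "tog (tog S i) j = tog (tog S j) i"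
  unfolding tog_def by auto

lemma finite_tog: "finite S \<Longrightarrow> finite (tog S i)"
  unfolding tog_def by auto

lemma sg_sq: "sg S i * sg S i = 1"
  unfolding sg_def by (simp flip: power_add)

lemma abs_sg: "\<bar>sg S i\<bar> = 1"
  unfolding sg_def by simp

lemma sg_tog_self: "sg (tog S i) i = sg S i"
proof -
  have "{k\<in>tog S i. k < i} = {k\<in>S. k < i}" unfolding tog_def by auto
  then show ?thesis unfolding sg_def by simp
qed

lemma sg_tog:
  assumes "finite S" "i \<noteq> j"
  shows "sg (tog S i) j = (if i < j then - sg S j else sg S j)"
proof (cases "i < j")
  case False
  then have "{k\<in>tog S i. k < j} = {k\<in>S. k < j}" using assms unfolding tog_def by auto
  then show ?thesis using False unfolding sg_def by simp
next
  case True
  show ?thesis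
  proof (cases "i \<in> S")
    case iS: True
    then have e: "{k\<in>tog S i. k < j} = {k\<in>S. k < j} - {i}" unfolding tog_def by auto
    have "i \<in> {k\<in>S. k < j}" using iS True by simp
    moreover have "finite {k\<in>S. k < j}" using assms by simp
    ultimately have "card {k\<in>S. k < j} = Suc (card {k\<in>tog S i. k < j})"
      unfolding e by (metis card_Suc_Diff1)
    then show ?thesis using True unfolding sg_def by simp
  next
    case iS: False
    then have e: "{k\<in>tog S i. k < j} = insert i {k\<in>S. k < j}" using True unfolding tog_def by auto
    have "card {k\<in>tog S i. k < j} = Suc (card {k\<in>S. k < j})"
      unfolding e using assms iS by simp
    then show ?thesis using True unfolding sg_def by simp
  qed
qed

lemma Aop_sq:
  assumes "finite C" "finite S"
  shows "Aop C (Aop C v) S = real (card C) * v S"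
proof -
  define G where "G i j = sg S i * sg (tog S i) j * v (tog (tog S i) j)" for i j
  define H where "H i j = (if i = j then 0 else G i j)" for i j
  have Hanti: "H j i = - H i j" for i j
  proof (cases "i = j")
    case True then show ?thesis unfolding H_def by simp
  next
    case False
    have tc: "tog (tog S j) i = tog (tog S i) j" by (rule tog_comm)
    show ?thesis
    proof (cases "i < j")
      case True
      have s1: "sg (tog S j) i = sg S i" using sg_tog[OF assms(2), of j i] True False by simp
      have s2: "sg (tog S i) j = - sg S j" using sg_tog[OF assms(2), of i j] True False by simp
      show ?thesis using False unfolding H_def G_def tc s1 s2 by simp
    next
      case f2: False
      then have ji: "j < i" using False by simp
      have s1: "sg (tog S j) i = - sg S i" using sg_tog[OF assms(2), of j i] ji False by simp
      have s2: "sg (tog S i) j = sg S j" using sg_tog[OF assms(2), of i j] ji False by simp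
      show ?thesis using False unfolding H_def G_def tc s1 s2 by simp
    qed
  qed
  have X0: "(\<Sum>i\<in>C. \<Sum>j\<in>C. H i j) = 0"
  proof -
    have "(\<Sum>i\<in>C. \<Sum>j\<in>C. H i j) = (\<Sum>j\<in>C. \<Sum>i\<in>C. H i j)" by (rule sum.swap)
    also have "\<dots> = (\<Sum>j\<in>C. \<Sum>i\<in>C. - H j i)" using Hanti by (intro sum.cong refl) metis
    also have "\<dots> = - (\<Sum>j\<in>C. \<Sum>i\<in>C. H j i)" by (simp add: sum_negf)
    finally show ?thesis by simp
  qed
  have row: "(\<Sum>j\<in>C. G i j) = v S + (\<Sum>j\<in>C. H i j)" if "i \<in> C" for i
  proof -
    have "(\<Sum>j\<in>C. G i j) = G i i + (\<Sum>j\<in>C-{i}. G i j)"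
      using that assms by (simp add: sum.remove)
    moreover have "(\<Sum>j\<in>C. H i j) = H i i + (\<Sum>j\<in>C-{i}. H i j)"
      using that assms by (simp add: sum.remove)
    moreover have "(\<Sum>j\<in>C-{i}. H i j) = (\<Sum>j\<in>C-{i}. G i j)"
      unfolding H_def by (intro sum.cong) auto
    moreover have "G i i = v S" unfolding G_def by (simp add: sg_tog_self sg_sq tog_tog)
    ultimately show ?thesis unfolding H_def by simp
  qed
  have "Aop C (Aop C v) S = (\<Sum>i\<in>C. \<Sum>j\<in>C. G i j)"
    unfolding Aop_def G_def by (simp add: sum_distrib_left mult.assoc)
  also have "\<dots> = (\<Sum>i\<in>C. v S + (\<Sum>j\<in>C. H i j))" by (intro sum.cong) (auto simp: row)
  also have "\<dots> = real (card C) * v S" using X0 by (simp add: sum.distrib)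
  finally show ?thesis .
qed

lemma Aop_lin: "Aop C (\<lambda>R. a * f R + g R) S = a * Aop C f S + Aop C g S"
  unfolding Aop_def by (simp add: sum.distrib sum_distrib_left algebra_simps)

lemma huang:
  fixes C :: "nat set" and H :: "nat set set"
  assumes fC: "finite C" and HC: "H \<subseteq> Pow C" and big: "2 ^ card C < 2 * card H"
  shows "\<exists>Q\<in>H. card C \<le> (card {i\<in>C. tog Q i \<in> H})^2"
proof (cases "C = {}")
  case True
  then have "H \<noteq> {}" using big by auto
  then obtain Q where "Q \<in> H" by blast
  then show ?thesis using True by auto
next
  case False
  define m where "m = card C"
  have m0: "m > 0" unfolding m_def using False fC by (simp add: card_gt_0_iff)
  define c where "c = Max C"
  have cC: "c \<in> C" unfolding c_def using False fC by simp
  define C' where "C' = C - {c}"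
  have fC': "finite C'" unfolding C'_def using fC by simp
  have cardC': "card C' = m - 1" unfolding C'_def m_def using cC fC by simp
  define I where "I = Pow C'"
  define J where "J = Pow C - H"
  have fI: "finite I" "finite J" unfolding I_def J_def using fC' fC by auto
  have cI: "card I = 2^(m-1)" unfolding I_def using fC' cardC' by (simp add: card_Pow)
  have fH: "finite H" using HC fC by (meson finite_Pow_iff finite_subset)
  have cJ: "card J = 2^m - card H" unfolding J_def m_def using HC fH fC by (simp add: card_Diff_subset card_Pow)
  have pm: "(2::nat)^m = 2 * 2^(m-1)" using m0 by (metis Suc_diff_1 power_Suc)
  have "2 * 2^(m-1) < 2 * card H" using big pm unfolding m_def by simp
  then have hH: "2^(m-1) < card H" by simp
  have "0 < (2::nat)^(m-1)" by simp
  then have JI: "card J < card I" unfolding cJ cI pm using hH by linarith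
  define sm where "sm = sqrt (real m)"
  have smsq: "sm * sm = real m" unfolding sm_def by simp
  define a where "a R S = (if S = R then sm else 0) + (\<Sum>i\<in>C. if S = tog R i then sg R i else 0)" for R S
  obtain y where ynz: "\<exists>S\<in>I. y S \<noteq> 0" and ysol: "\<forall>R\<in>J. (\<Sum>S\<in>I. a R S * y S) = 0"
    using nontriv_sol[OF fI(2) fI(1) JI, of a] by blast
  define u where "u S = (if S \<in> I then y S else 0)" for S
  define v where "v R = sm * u R + Aop C u R" for R
  have vlin: "v R = (\<Sum>S\<in>I. a R S * y S)" for R
  proof -
    have "(\<Sum>S\<in>I. a R S * y S) = (\<Sum>S\<in>I. (if S = R then sm * y S else 0)) + (\<Sum>S\<in>I. \<Sum>i\<in>C. (if S = tog R i then sg R i * y S else 0))"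
    proof -
      have "a R S * y S = (if S = R then sm * y S else 0) + (\<Sum>i\<in>C. (if S = tog R i then sg R i * y S else 0))" for S
        unfolding a_def distrib_right sum_distrib_right by (intro arg_cong2[where f="(+)"] sum.cong) auto
      then show ?thesis by (simp add: sum.distrib)
    qed
    also have "(\<Sum>S\<in>I. (if S = R then sm * y S else 0)) = sm * u R"
      unfolding u_def using fI by (simp add: sum.delta)
    also have "(\<Sum>S\<in>I. \<Sum>i\<in>C. (if S = tog R i then sg R i * y S else 0)) = (\<Sum>i\<in>C. \<Sum>S\<in>I. (if S = tog R i then sg R i * y S else 0))"
      by (rule sum.swap)
    also have "\<dots> = Aop C u R"
      unfolding Aop_def u_def using fI by (simp add: sum.delta) (intro sum.cong; simp)
    finally show ?thesis unfolding v_def by simp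
  qed
  have vJ: "v R = 0" if "R \<in> J" for R using ysol that vlin by simp
  have eig: "Aop C v R = sm * v R" if "finite R" for R
  proof -
    have "Aop C v R = sm * Aop C u R + Aop C (Aop C u) R"
      unfolding v_def by (rule Aop_lin)
    also have "\<dots> = sm * Aop C u R + real m * u R"
      using Aop_sq[OF fC that] unfolding m_def by simp
    also have "\<dots> = sm * v R" unfolding v_def using smsq by (simp add: algebra_simps)
    finally show ?thesis .
  qed
  obtain S0 where S0: "S0 \<in> I" "y S0 \<noteq> 0" using ynz by blast
  define R0 where "R0 = insert c S0"
  have S0C': "S0 \<subseteq> C'" using S0 unfolding I_def by simp
  have cS0: "c \<notin> S0" using S0C' unfolding C'_def by auto
  have R0C: "R0 \<in> Pow C" unfolding R0_def using S0C' cC unfolding C'_def by auto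
  have "v R0 \<noteq> 0"
  proof -
    have uR0: "u R0 = 0" unfolding u_def I_def R0_def C'_def by auto
    have tc: "tog R0 c = S0" unfolding tog_def R0_def using cS0 by auto
    have other: "u (tog R0 i) = 0" if "i \<in> C - {c}" for i
    proof -
      have "c \<in> tog R0 i" using that unfolding tog_def R0_def by auto
      then show ?thesis unfolding u_def I_def C'_def by auto
    qed
    have "Aop C u R0 = sg R0 c * u (tog R0 c) + (\<Sum>i\<in>C-{c}. sg R0 i * u (tog R0 i))"
      unfolding Aop_def using cC fC by (simp add: sum.remove)
    also have "(\<Sum>i\<in>C-{c}. sg R0 i * u (tog R0 i)) = 0" using other by simp
    finally have A: "Aop C u R0 = sg R0 c * u S0" unfolding tc by simp
    have uS0: "u S0 = y S0" using S0 unfolding u_def by simp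
    have "v R0 = sg R0 c * y S0" unfolding v_def uR0 A uS0 by simp
    moreover have "sg R0 c \<noteq> 0" using abs_sg[of R0 c] by auto
    ultimately show ?thesis using S0 by simp
  qed
  define M where "M = Max ((\<lambda>R. \<bar>v R\<bar>) ` Pow C)"
  have "M \<in> (\<lambda>R. \<bar>v R\<bar>) ` Pow C" unfolding M_def using fC by (intro Max_in) auto
  then obtain R1 where R1: "R1 \<in> Pow C" "\<bar>v R1\<bar> = M" by blast
  have Mmax: "\<bar>v R\<bar> \<le> M" if "R \<in> Pow C" for R unfolding M_def using fC that by (intro Max_ge) auto
  have Mpos: "M > 0" using Mmax[OF R0C] \<open>v R0 \<noteq> 0\<close> by simp
  have R1H: "R1 \<in> H"
  proof (rule ccontr)
    assume "R1 \<notin> H"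
    then have "R1 \<in> J" unfolding J_def using R1 by simp
    then show False using vJ R1 Mpos by simp
  qed
  have fR1: "finite R1" using R1 fC by (meson PowD finite_subset)
  define D where "D = {i\<in>C. tog R1 i \<in> H}"
  have togC: "tog R1 i \<in> Pow C" if "i \<in> C" for i using R1 that unfolding tog_def by auto
  have "sm * M = \<bar>Aop C v R1\<bar>" using eig[OF fR1] R1 unfolding sm_def by (simp add: abs_mult)
  also have "\<dots> \<le> (\<Sum>i\<in>C. \<bar>sg R1 i * v (tog R1 i)\<bar>)" unfolding Aop_def by (rule sum_abs)
  also have "\<dots> = (\<Sum>i\<in>C. \<bar>v (tog R1 i)\<bar>)" by (simp add: abs_mult abs_sg)
  also have "\<dots> = (\<Sum>i\<in>D. \<bar>v (tog R1 i)\<bar>)"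
  proof -
    have "(\<Sum>i\<in>C. \<bar>v (tog R1 i)\<bar>) = (\<Sum>i\<in>D. \<bar>v (tog R1 i)\<bar>) + (\<Sum>i\<in>C-D. \<bar>v (tog R1 i)\<bar>)"
    proof -
      have "D \<subseteq> C" unfolding D_def by auto
      then show ?thesis using sum.subset_diff[of D C "\<lambda>i. \<bar>v (tog R1 i)\<bar>"] fC by simp
    qed
    moreover have "(\<Sum>i\<in>C-D. \<bar>v (tog R1 i)\<bar>) = 0"
    proof (intro sum.neutral ballI)
      fix i assume "i \<in> C - D"
      then have "tog R1 i \<in> J" unfolding D_def J_def using togC by auto
      then show "\<bar>v (tog R1 i)\<bar> = 0" using vJ by simp
    qed
    ultimately show ?thesis by simp
  qed
  also have "\<dots> \<le> (\<Sum>i\<in>D. M)" using togC unfolding D_def by (intro sum_mono Mmax) auto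
  also have "\<dots> = real (card D) * M" by simp
  finally have "sm * M \<le> real (card D) * M" .
  then have "sm \<le> real (card D)" using Mpos by simp
  then have "sm * sm \<le> real (card D) * real (card D)"
    using mult_mono[of sm "real (card D)" sm "real (card D)"] unfolding sm_def by simp
  then have "real m \<le> real ((card D)^2)" using smsq by (simp add: power2_eq_square)
  then have "m \<le> (card D)^2" by linarith
  then show ?thesis using R1H unfolding D_def m_def by blast
qed

lemma alt_zero:
  assumes "finite R" "R \<noteq> {}"
  shows "(\<Sum>Q\<in>Pow R. (-1::real)^card Q) = 0"
proof -
  have "card {T. T \<subseteq> R \<and> {} \<subseteq> T \<and> even(card T)} = card {T. T \<subseteq> R \<and> {} \<subseteq> T \<and> odd(card T)}"
    using assms by (intro card_subsupersets_even_odd) auto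
  then have "card {x. x \<in> Pow R \<and> even (card x)} = card {x. x \<in> Pow R \<and> odd (card x)}" by simp
  then show ?thesis using assms by (intro sum_alternating_cancels) auto
qed

lemma flip_tog: "flip (flip w Q) {i} = flip w (tog Q i)"
  unfolding flip_def tog_def by auto

lemma flip_cube: "w \<in> cube n \<Longrightarrow> Q \<subseteq> {1..n} \<Longrightarrow> flip w Q \<in> cube n"
  unfolding cube_def flip_def by auto

lemma finite_cube: "finite (cube n)" unfolding cube_def by simp

lemma sens_le: "y \<in> cube n \<Longrightarrow> sens_at n f y \<le> sensitivity n f"
  unfolding sensitivity_def using finite_cube by (intro Max_ge) auto

lemma parity_tog: "finite Q \<Longrightarrow> (-1::real)^card (tog Q i) = - ((-1)^card Q)"
proof (cases "i \<in> Q")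
  case True
  assume f: "finite Q"
  then have e: "card Q = Suc (card (Q - {i}))" using True by (metis card_Suc_Diff1)
  have "tog Q i = Q - {i}" using True unfolding tog_def by simp
  then show ?thesis unfolding e by simp
next
  case False
  assume f: "finite Q"
  then show ?thesis using False unfolding tog_def by simp
qed

lemma huang_app:
  assumes w: "w \<in> cube n" and R: "R \<subseteq> {1..n}"
    and nz: "(\<Sum>Q\<in>Pow R. (-1::real)^card Q * (if f (flip w Q) then 1 else -1)) \<noteq> 0"
  shows "card R \<le> (sensitivity n f)^2"
proof -
  define h where "h Q = (-1::real)^card Q * (if f (flip w Q) then 1 else -1)" for Q
  have fR: "finite R" using R finite_subset by blast
  have hpm: "h Q = 1 \<or> h Q = -1" for Q unfolding h_def by (cases "even (card Q)") auto
  define Hp where "Hp = {Q\<in>Pow R. h Q = 1}"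
  define Hm where "Hm = {Q\<in>Pow R. h Q = -1}"
  have fP: "finite (Pow R)" using fR by simp
  have un: "Pow R = Hp \<union> Hm" unfolding Hp_def Hm_def using hpm by auto
  have dis: "Hp \<inter> Hm = {}" unfolding Hp_def Hm_def by auto
  have fHp: "finite Hp" "finite Hm" unfolding Hp_def Hm_def using fP by auto
  have "(\<Sum>Q\<in>Pow R. h Q) = (\<Sum>Q\<in>Hp. h Q) + (\<Sum>Q\<in>Hm. h Q)"
    unfolding un using fHp dis by (simp add: sum.union_disjoint)
  also have "\<dots> = real (card Hp) - real (card Hm)"
    unfolding Hp_def Hm_def by simp
  finally have sh: "(\<Sum>Q\<in>Pow R. h Q) = real (card Hp) - real (card Hm)" .
  have "card Hp + card Hm = card (Pow R)"
    using card_Un_disjoint[OF fHp dis] un by simp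
  also have "\<dots> = 2 ^ card R" using fR by (simp add: card_Pow)
  finally have cs: "card Hp + card Hm = 2 ^ card R" .
  have "card Hp \<noteq> card Hm" using nz sh unfolding h_def by auto
  then have "card Hm < card Hp \<or> card Hp < card Hm" by linarith
  then obtain H eps where H: "H = {Q\<in>Pow R. h Q = eps}" "2 ^ card R < 2 * card H"
  proof
    assume "card Hm < card Hp"
    then have "2 ^ card R < 2 * card Hp" using cs by linarith
    then show thesis using that[of Hp 1] unfolding Hp_def by blast
  next
    assume "card Hp < card Hm"
    then have "2 ^ card R < 2 * card Hm" using cs by linarith
    then show thesis using that[of Hm "-1"] unfolding Hm_def by blast
  qed
  have HR: "H \<subseteq> Pow R" using H by auto
  obtain Q where Q: "Q \<in> H" "card R \<le> (card {i\<in>R. tog Q i \<in> H})^2"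
    using huang[OF fR HR H(2)] by blast
  have QR: "Q \<subseteq> R" using Q HR by auto
  have fQ: "finite Q" using QR fR finite_subset by blast
  have Qc: "flip w Q \<in> cube n" using QR R w by (intro flip_cube) auto
  have sub: "{i\<in>R. tog Q i \<in> H} \<subseteq> {i\<in>{1..n}. f (flip w Q) \<noteq> f (flip (flip w Q) {i})}"
  proof
    fix i assume i: "i \<in> {i\<in>R. tog Q i \<in> H}"
    then have "h (tog Q i) = h Q" using Q H by auto
    then have "(-1::real)^card Q * (if f (flip w Q) then 1 else -1) = - ((-1)^card Q) * (if f (flip w (tog Q i)) then 1 else -1)"
      unfolding h_def parity_tog[OF fQ] by simp
    then have "f (flip w Q) \<noteq> f (flip w (tog Q i))" by (cases "f (flip w Q)"; cases "f (flip w (tog Q i))") auto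
    then show "i \<in> {i\<in>{1..n}. f (flip w Q) \<noteq> f (flip (flip w Q) {i})}"
      using i R unfolding flip_tog by auto
  qed
  have "card {i\<in>R. tog Q i \<in> H} \<le> sens_at n f (flip w Q)"
    unfolding sens_at_def by (intro card_mono sub) auto
  also have "\<dots> \<le> sensitivity n f" using sens_le[OF Qc] .
  finally have "(card {i\<in>R. tog Q i \<in> H})^2 \<le> (sensitivity n f)^2" by (rule power_mono) simp
  then show ?thesis using Q(2) by linarith
qed

lemma count_supsets:
  assumes fA: "finite A" and VA: "V \<subseteq> A"
  shows "card {Y. Y \<subseteq> A \<and> card Y = k \<and> V \<subseteq> Y} = (if card V \<le> k then (card A - card V) choose (k - card V) else 0)"
proof (cases "card V \<le> k")
  case False
  have "{Y. Y \<subseteq> A \<and> card Y = k \<and> V \<subseteq> Y} = {}"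
  proof (rule ccontr)
    assume "{Y. Y \<subseteq> A \<and> card Y = k \<and> V \<subseteq> Y} \<noteq> {}"
    then obtain Y where Y: "Y \<subseteq> A" "card Y = k" "V \<subseteq> Y" by blast
    then have "card V \<le> card Y" using fA by (meson card_mono finite_subset)
    then show False using False Y by simp
  qed
  then show ?thesis using False by (simp only: card.empty) simp
next
  case True
  have fV: "finite V" using fA VA finite_subset by blast
  have bij: "bij_betw (\<lambda>Y. Y - V) {Y. Y \<subseteq> A \<and> card Y = k \<and> V \<subseteq> Y} {Z. Z \<subseteq> A - V \<and> card Z = k - card V}"
  proof (rule bij_betw_byWitness[where f'="\<lambda>Z. Z \<union> V"])
    show "\<forall>Y\<in>{Y. Y \<subseteq> A \<and> card Y = k \<and> V \<subseteq> Y}. Y - V \<union> V = Y" by auto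
    show "\<forall>Z\<in>{Z. Z \<subseteq> A - V \<and> card Z = k - card V}. Z \<union> V - V = Z" by auto
    show "(\<lambda>Y. Y - V) ` {Y. Y \<subseteq> A \<and> card Y = k \<and> V \<subseteq> Y} \<subseteq> {Z. Z \<subseteq> A - V \<and> card Z = k - card V}"
    proof
      fix Z assume "Z \<in> (\<lambda>Y. Y - V) ` {Y. Y \<subseteq> A \<and> card Y = k \<and> V \<subseteq> Y}"
      then obtain Y where Y: "Y \<subseteq> A" "card Y = k" "V \<subseteq> Y" "Z = Y - V" by blast
      have "finite Y" using Y fA finite_subset by blast
      then have "card Z = k - card V" using Y fV by (simp add: card_Diff_subset)
      then show "Z \<in> {Z. Z \<subseteq> A - V \<and> card Z = k - card V}" using Y by auto
    qed
    show "(\<lambda>Z. Z \<union> V) ` {Z. Z \<subseteq> A - V \<and> card Z = k - card V} \<subseteq> {Y. Y \<subseteq> A \<and> card Y = k \<and> V \<subseteq> Y}"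
    proof
      fix Y assume "Y \<in> (\<lambda>Z. Z \<union> V) ` {Z. Z \<subseteq> A - V \<and> card Z = k - card V}"
      then obtain Z where Z: "Z \<subseteq> A - V" "card Z = k - card V" "Y = Z \<union> V" by blast
      have "finite Z" using Z fA finite_subset by blast
      moreover have "Z \<inter> V = {}" using Z by auto
      ultimately have "card Y = card Z + card V" using Z fV by (simp add: card_Un_disjoint)
      then have "card Y = k" using Z True by simp
      then show "Y \<in> {Y. Y \<subseteq> A \<and> card Y = k \<and> V \<subseteq> Y}" using Z VA by auto
    qed
  qed
  have "card {Y. Y \<subseteq> A \<and> card Y = k \<and> V \<subseteq> Y} = card {Z. Z \<subseteq> A - V \<and> card Z = k - card V}"
    using bij by (rule bij_betw_same_card)
  also have "\<dots> = card (A - V) choose (k - card V)" using fA by (intro n_subsets) simp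
  also have "card (A - V) = card A - card V" using VA fV by (simp add: card_Diff_subset)
  finally show ?thesis using True by simp
qed

lemma block_bound:
  assumes x: "x \<in> cube n"
    and Bne: "\<forall>j<t. B j \<noteq> {} \<and> B j \<subseteq> {1..n} \<and> f x \<noteq> f (flip x (B j))"
    and dis: "\<forall>j<t. \<forall>k<t. j \<noteq> k \<longrightarrow> B j \<inter> B k = {}"
  shows "t \<le> 2 * (sensitivity n f)^4"
proof (cases "t = 0")
  case True then show ?thesis by simp
next
  case False
  then have t1: "1 \<le> t" by simp
  define s where "s = sensitivity n f"
  define d where "d = s^2"
  define G where "G S = (if f (flip x S) = f x then 0 else 1::real)" for S
  define b where "b R = (\<Sum>Q\<in>Pow R. (-1)^card Q * G Q)" for R
  have Gexp: "G S = (\<Sum>T\<in>Pow S. (-1)^card T * b T)" if "finite S" for S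
    using inclusion_exclusion_symmetric[of b G S] that unfolding b_def by simp
  have bzero: "b R = 0" if R: "R \<subseteq> {1..n}" and cR: "d < card R" for R
  proof (rule ccontr)
    assume bnz: "b R \<noteq> 0"
    have fR: "finite R" using R finite_subset by blast
    have Rne: "R \<noteq> {}" using cR by auto
    define sx where "sx = (if f x then 1 else -1::real)"
    have Gs: "G Q = 1/2 - sx/2 * (if f (flip x Q) then 1 else -1)" for Q
      unfolding G_def sx_def by auto
    have "b R = (\<Sum>Q\<in>Pow R. (-1)^card Q * (1/2)) - sx/2 * (\<Sum>Q\<in>Pow R. (-1::real)^card Q * (if f (flip x Q) then 1 else -1))"
    proof -
      have "(-1)^card Q * G Q = (-1)^card Q * (1/2) - sx/2 * ((-1::real)^card Q * (if f (flip x Q) then 1 else -1))" for Q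
        unfolding Gs by (simp add: algebra_simps)
      then have "b R = (\<Sum>Q\<in>Pow R. (-1)^card Q * (1/2) - sx/2 * ((-1::real)^card Q * (if f (flip x Q) then 1 else -1)))"
        unfolding b_def by simp
      then show ?thesis by (simp only: sum_subtractf sum_distrib_left)
    qed
    also have "(\<Sum>Q\<in>Pow R. (-1::real)^card Q * (1/2)) = (\<Sum>Q\<in>Pow R. (-1::real)^card Q) * (1/2)"
      by (simp add: sum_distrib_right)
    also have "\<dots> = 0" using alt_zero[OF fR Rne] by simp
    finally have "(\<Sum>Q\<in>Pow R. (-1::real)^card Q * (if f (flip x Q) then 1 else -1)) \<noteq> 0"
      using bnz by auto
    then have "card R \<le> s^2" using huang_app[OF x R] unfolding s_def by blast
    then show False using cR unfolding d_def by simp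
  qed
  define W where "W = \<Union>(B ` {..<t})"
  have WS: "W \<subseteq> {1..n}" unfolding W_def using Bne by auto
  have fW: "finite W" using WS finite_subset by blast
  define V where "V T = {j\<in>{..<t}. B j \<inter> T \<noteq> {}}" for T
  have VT: "V T \<subseteq> {..<t}" for T unfolding V_def by auto
  have key: "T \<subseteq> \<Union>(B ` Y) \<longleftrightarrow> V T \<subseteq> Y" if Y: "Y \<subseteq> {..<t}" and T: "T \<subseteq> W" for T Y
  proof
    assume "T \<subseteq> \<Union>(B ` Y)"
    show "V T \<subseteq> Y"
    proof
      fix j assume "j \<in> V T"
      then obtain r where r: "r \<in> B j" "r \<in> T" "j < t" unfolding V_def by auto
      then obtain j' where j': "j' \<in> Y" "r \<in> B j'" using \<open>T \<subseteq> \<Union>(B ` Y)\<close> by auto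
      have "j' < t" using j' Y by auto
      then have "j = j'" using dis r j' by blast
      then show "j \<in> Y" using j' by simp
    qed
  next
    assume VY: "V T \<subseteq> Y"
    show "T \<subseteq> \<Union>(B ` Y)"
    proof
      fix r assume "r \<in> T"
      then obtain j where j: "j < t" "r \<in> B j" using T unfolding W_def by auto
      then have "j \<in> V T" unfolding V_def using \<open>r \<in> T\<close> by auto
      then show "r \<in> \<Union>(B ` Y)" using VY j by auto
    qed
  qed
  define c where "c T = (-1)^card T * b T" for T
  have gY: "G (\<Union>(B ` Y)) = (\<Sum>T\<in>Pow W. if V T \<subseteq> Y then c T else 0)" if Y: "Y \<subseteq> {..<t}" for Y
  proof -
    have UW: "\<Union>(B ` Y) \<subseteq> W" unfolding W_def using Y by auto
    have fU: "finite (\<Union>(B ` Y))" using UW fW finite_subset by blast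
    have e: "{T \<in> Pow W. V T \<subseteq> Y} = Pow (\<Union>(B ` Y))"
    proof
      show "{T \<in> Pow W. V T \<subseteq> Y} \<subseteq> Pow (\<Union>(B ` Y))" using key[OF Y] by auto
      show "Pow (\<Union>(B ` Y)) \<subseteq> {T \<in> Pow W. V T \<subseteq> Y}"
      proof
        fix T assume T: "T \<in> Pow (\<Union>(B ` Y))"
        then have "T \<subseteq> W" using UW by auto
        then show "T \<in> {T \<in> Pow W. V T \<subseteq> Y}" using key[OF Y, of T] T by auto
      qed
    qed
    have "(\<Sum>T\<in>Pow W. if V T \<subseteq> Y then c T else 0) = (\<Sum>T\<in>{T \<in> Pow W. V T \<subseteq> Y}. c T)"
      by (rule sum.inter_filter[symmetric]) (simp add: fW)
    also have "\<dots> = G (\<Union>(B ` Y))" unfolding e Gexp[OF fU] c_def by simp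
    finally show ?thesis by simp
  qed
  have cardV: "card (V T) \<le> card T" if "finite T" for T
  proof -
    define r where "r j = (SOME q. q \<in> B j \<inter> T)" for j
    have rin: "r j \<in> B j \<inter> T" if "j \<in> V T" for j
    proof -
      have "\<exists>q. q \<in> B j \<inter> T" using that unfolding V_def by auto
      then show ?thesis unfolding r_def by (rule someI_ex)
    qed
    have "inj_on r (V T)"
    proof (rule inj_onI)
      fix i j assume ij: "i \<in> V T" "j \<in> V T" "r i = r j"
      have "r i \<in> B i" using rin[OF ij(1)] by simp
      moreover have "r i \<in> B j" using rin[OF ij(2)] ij(3) by simp
      moreover have "i < t" "j < t" using ij unfolding V_def by auto
      ultimately show "i = j" using dis by blast
    qed
    moreover have "r ` V T \<subseteq> T" using rin by auto
    ultimately show ?thesis using that by (meson card_inj_on_le)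
  qed
  have cz: "c T = 0" if "T \<in> Pow W" "d < card T" for T
    unfolding c_def using bzero[of T] that WS by auto
  define p where "p k = (\<Sum>T\<in>Pow W. c T * (real (k choose card (V T)) / real (t choose card (V T))))" for k
  have PPp: "PP d p"
    unfolding p_def
  proof (intro PP_sum)
    show "finite (Pow W)" using fW by simp
  next
    fix T assume T: "T \<in> Pow W"
    show "PP d (\<lambda>k. c T * (real (k choose card (V T)) / real (t choose card (V T))))"
    proof (cases "d < card T")
      case True
      then have "(\<lambda>k. c T * (real (k choose card (V T)) / real (t choose card (V T)))) = (\<lambda>k. 0)"
        using cz[OF T] by simp
      then show ?thesis using PP_const by simp
    next
      case False
      have fT: "finite T" using T fW finite_subset by blast
      have "card (V T) \<le> d" using cardV[OF fT] False by simp
      moreover have "PP (card (V T)) (\<lambda>k. (c T / real (t choose card (V T))) * real (k choose card (V T)))"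
        by (intro PP_scale PP_binom)
      moreover have "(\<lambda>k. (c T / real (t choose card (V T))) * real (k choose card (V T))) = (\<lambda>k. c T * (real (k choose card (V T)) / real (t choose card (V T))))"
        by (rule ext) simp
      ultimately show ?thesis using PP_mono by metis
    qed
  qed
  define Sk where "Sk k = {Y. Y \<subseteq> {..<t} \<and> card Y = k}" for k
  have fSk: "finite (Sk k)" for k unfolding Sk_def by simp
  have cSk: "card (Sk k) = t choose k" for k unfolding Sk_def using n_subsets[of "{..<t}" k] by simp
  have sym: "real (t choose k) * p k = (\<Sum>Y\<in>Sk k. G (\<Union>(B ` Y)))" if k: "k \<le> t" for k
  proof -
    have "(\<Sum>Y\<in>Sk k. G (\<Union>(B ` Y))) = (\<Sum>Y\<in>Sk k. \<Sum>T\<in>Pow W. if V T \<subseteq> Y then c T else 0)"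
      by (intro sum.cong refl gY) (auto simp: Sk_def)
    also have "\<dots> = (\<Sum>T\<in>Pow W. \<Sum>Y\<in>Sk k. if V T \<subseteq> Y then c T else 0)" by (rule sum.swap)
    also have "\<dots> = (\<Sum>T\<in>Pow W. c T * real (card {Y. Y \<subseteq> {..<t} \<and> card Y = k \<and> V T \<subseteq> Y}))"
    proof (intro sum.cong refl)
      fix T
      have "(\<Sum>Y\<in>Sk k. if V T \<subseteq> Y then c T else 0) = (\<Sum>Y\<in>{Y\<in>Sk k. V T \<subseteq> Y}. c T)"
        by (rule sum.inter_filter[symmetric]) (simp add: fSk)
      also have "\<dots> = c T * real (card {Y\<in>Sk k. V T \<subseteq> Y})" by simp
      also have "{Y\<in>Sk k. V T \<subseteq> Y} = {Y. Y \<subseteq> {..<t} \<and> card Y = k \<and> V T \<subseteq> Y}" unfolding Sk_def by auto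
      finally show "(\<Sum>Y\<in>Sk k. if V T \<subseteq> Y then c T else 0) = c T * real (card {Y. Y \<subseteq> {..<t} \<and> card Y = k \<and> V T \<subseteq> Y})" .
    qed
    also have "\<dots> = real (t choose k) * p k"
      unfolding p_def sum_distrib_left
    proof (intro sum.cong refl)
      fix T
      define v where "v = card (V T)"
      have vt: "v \<le> t" unfolding v_def using VT[of T] by (metis card_lessThan card_mono finite_lessThan)
      have tv0: "real (t choose v) \<noteq> 0" using vt by simp
      have cnt: "card {Y. Y \<subseteq> {..<t} \<and> card Y = k \<and> V T \<subseteq> Y} = (if v \<le> k then (t - v) choose (k - v) else 0)"
        using count_supsets[of "{..<t}" "V T" k] VT unfolding v_def by simp
      show "c T * real (card {Y. Y \<subseteq> {..<t} \<and> card Y = k \<and> V T \<subseteq> Y}) = real (t choose k) * (c T * (real (k choose card (V T)) / real (t choose card (V T))))"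
      proof (cases "v \<le> k")
        case True
        have "(t choose k) * (k choose v) = (t choose v) * ((t - v) choose (k - v))"
          using choose_mult[OF True k] .
        then have "real (t choose k) * real (k choose v) = real (t choose v) * real ((t - v) choose (k - v))"
          by (metis of_nat_mult)
        then have "real (t choose k) * (c T * (real (k choose v) / real (t choose v))) = c T * real ((t - v) choose (k - v))"
          using tv0 by (simp add: field_simps)
        then show ?thesis unfolding cnt v_def[symmetric] using True by simp
      next
        case False
        then show ?thesis unfolding cnt v_def[symmetric] by simp
      qed
    qed
    finally show ?thesis by simp
  qed
  have G01: "0 \<le> G S \<and> G S \<le> 1" for S unfolding G_def by simp
  have pb: "0 \<le> p k \<and> p k \<le> 1" if k: "k \<le> t" for k
  proof -
    have pos: "real (t choose k) > 0" using k by simp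
    have "0 \<le> (\<Sum>Y\<in>Sk k. G (\<Union>(B ` Y)))" using G01 by (intro sum_nonneg) auto
    moreover have "(\<Sum>Y\<in>Sk k. G (\<Union>(B ` Y))) \<le> (\<Sum>Y\<in>Sk k. 1)" using G01 by (intro sum_mono) auto
    ultimately have "0 \<le> real (t choose k) * p k" "real (t choose k) * p k \<le> real (t choose k) * 1"
      using sym[OF k] cSk by auto
    then show ?thesis using pos by (simp add: zero_le_mult_iff mult_le_cancel_left_pos)
  qed
  have p0: "p 0 = 0"
  proof -
    have "Sk 0 = {{}}"
    proof -
      have "Y = {}" if "Y \<subseteq> {..<t}" "card Y = 0" for Y :: "nat set"
      proof -
        have "finite Y" using that(1) finite_subset by blast
        then show ?thesis using that(2) by simp
      qed
      then show ?thesis unfolding Sk_def by auto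
    qed
    then have "real (t choose 0) * p 0 = G {}" using sym[of 0] by simp
    moreover have "G {} = 0" unfolding G_def flip_def by simp
    ultimately show ?thesis by simp
  qed
  have p1: "p 1 = 1"
  proof -
    have "(\<Sum>Y\<in>Sk 1. G (\<Union>(B ` Y))) = (\<Sum>Y\<in>Sk 1. 1)"
    proof (intro sum.cong refl)
      fix Y assume "Y \<in> Sk 1"
      then obtain j where j: "Y = {j}" "j < t" unfolding Sk_def by (auto simp: card_1_singleton_iff)
      then show "G (\<Union>(B ` Y)) = 1" using Bne unfolding G_def by auto
    qed
    then have "real t * p 1 = real t" using sym[OF t1] cSk by simp
    then show ?thesis using t1 by simp
  qed
  have "t \<le> 2 * d^2" using discrete_markov[OF PPp p0 p1 pb] by blast
  then show ?thesis unfolding d_def s_def by (simp add: power_mult[symmetric])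
qed

theorem mainTheorem3:
  fixes n :: nat and f :: "nat set \<Rightarrow> bool"
  assumes "n \<ge> 1"
  shows "block_sensitivity n f \<le> 2 * sensitivity n f ^ 4"
proof -
  define S where "S = {t. \<exists>x \<in> cube n. \<exists>B :: nat \<Rightarrow> nat set.
      (\<forall>j<t. B j \<noteq> {} \<and> B j \<subseteq> {1..n} \<and> f x \<noteq> f (flip x (B j))) \<and>
      (\<forall>j<t. \<forall>k<t. j \<noteq> k \<longrightarrow> B j \<inter> B k = {})}"
  have bnd: "t \<le> 2 * sensitivity n f ^ 4" if "t \<in> S" for t
    using that block_bound unfolding S_def by blast
  have "{} \<in> cube n" unfolding cube_def by simp
  then have "0 \<in> S" unfolding S_def by blast
  then have ne: "S \<noteq> {}" by blast
  have fin: "finite S" using bnd by (meson finite_nat_set_iff_bounded_le)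
  have "Max S \<le> 2 * sensitivity n f ^ 4" using fin ne bnd by (simp add: Max_le_iff)
  then show ?thesis unfolding block_sensitivity_def S_def by simp
qed

end
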